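(* For any integer $m\ge1$ and any $d\ge2$, there is a pool $S_u\subseteq\mathbb{R}_+^d$ of size $m$ whose auditing complexity with respect to $\mathcal{H}_\Box^-$ is $m$.
   Context: For $\mathbf a\in\mathbb{R}_+^d$, $h_{\mathbf a}(x)=2\mathbb{I}[\exists i\in[d],\ x[i]\ge a[i]]-1$ and $h^-_{\mathbf a}=-h_{\mathbf a}$; $\mathcal{H}_\Box^-=\{h^-_{\mathbf a}:\mathbf a\in\mathbb{R}_+^d\}$ (negatives outside the rectangle). The auditing complexity of a finite unlabeled pool $S_u$ with respect to a class $\mathcal{H}$ is the minimum, over algorithms that sequentially query labels of points of $S_u$ and that for every labeling of $S_u$ consistent with some $h\in\mathcal{H}$ output (with probability 1) a hypothesis with zero error on the labeled pool, of the worst case (over such labelings) number of queried points whose label is $-1$. *)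

theory Defs
  imports "HOL-Analysis.Analysis"
begin

definition nonneg_orthant :: "(real ^ 'd) set" where
  "nonneg_orthant = {x. \<forall>i. x $ i \<ge> 0}"

definition h_box :: "real ^ 'd \<Rightarrow> real ^ 'd \<Rightarrow> int" where
  "h_box a x = (if \<exists>i. x $ i \<ge> a $ i then 1 else -1)"

definition h_box_neg :: "real ^ 'd \<Rightarrow> real ^ 'd \<Rightarrow> int" where
  "h_box_neg a x = - h_box a x"

definition H_box_neg :: "(real ^ 'd \<Rightarrow> int) set" where
  "H_box_neg = {h_box_neg a | a. a \<in> nonneg_orthant}"

text \<open>Deterministic adaptive label-query algorithms as finite decision trees:
  either output a hypothesis, or query a point and continue in the branch
  for label +1 (first subtree) or label -1 (second subtree).\<close>
datatype 'x qtree = Output "'x \<Rightarrow> int" | Query 'x "'x qtree" "'x qtree"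

fun run :: "'x qtree \<Rightarrow> ('x \<Rightarrow> int) \<Rightarrow> 'x set \<times> ('x \<Rightarrow> int)" where
  "run (Output g) L = ({}, g)"
| "run (Query x tp tn) L =
     (let (Q, g) = run (if L x = 1 then tp else tn) L in (insert x Q, g))"

definition correct_auditor :: "'x set \<Rightarrow> ('x \<Rightarrow> int) set \<Rightarrow> 'x qtree \<Rightarrow> bool" where
  "correct_auditor S H T \<longleftrightarrow>
     (\<forall>h\<in>H. fst (run T h) \<subseteq> S \<and> (\<forall>x\<in>S. snd (run T h) x = h x))"

definition neg_queries :: "'x qtree \<Rightarrow> ('x \<Rightarrow> int) \<Rightarrow> nat" where
  "neg_queries T h = card {x \<in> fst (run T h). h x = -1}"

definition auditing_complexity :: "'x set \<Rightarrow> ('x \<Rightarrow> int) set \<Rightarrow> nat" where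
  "auditing_complexity S H =
     (LEAST k. \<exists>T. correct_auditor S H T \<and> (\<forall>h\<in>H. neg_queries T h \<le> k))"

end

theory Submission
  imports Defs
begin

lemma run_finite: "finite (fst (run T h))"
  by (induction T) (auto split: prod.splits)

lemma run_agree:
  "(\<forall>x\<in>fst (run T h0). h1 x = h0 x) \<Longrightarrow> run T h1 = run T h0"
  by (induction T) (auto split: prod.splits if_splits)

fun build :: "'x list \<Rightarrow> ('x \<Rightarrow> int) \<Rightarrow> 'x qtree" where
  "build [] g = Output g"
| "build (x#xs) g = Query x (build xs (g(x:=1))) (build xs (g(x:=-1)))"

lemma build_run:
  "(\<forall>x\<in>set xs. h x = 1 \<or> h x = -1) \<Longrightarrow>
   fst (run (build xs g) h) = set xs \<and>
   (\<forall>y. snd (run (build xs g) h) y = (if y \<in> set xs then h y else g y))"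
proof (induction xs arbitrary: g)
  case Nil
  then show ?case by simp
next
  case (Cons x xs)
  show ?case
  proof (cases "h x = 1")
    case True
    obtain Q f where r: "run (build xs (g(x:=1))) h = (Q, f)" by fastforce
    from Cons.IH[of "g(x:=1)"] Cons.prems True r show ?thesis
      by (simp del: fun_upd_apply) (auto simp: fun_upd_def)
  next
    case False
    with Cons.prems have "h x = -1" by auto
    obtain Q f where r: "run (build xs (g(x:=-1))) h = (Q, f)" by fastforce
    from Cons.IH[of "g(x:=-1)"] Cons.prems False r show ?thesis
      by (simp del: fun_upd_apply) (auto simp: fun_upd_def)
  qed
qed

lemma H_vals: "h \<in> H_box_neg \<Longrightarrow> h x = 1 \<or> h x = -1"
  by (auto simp: H_box_neg_def h_box_neg_def h_box_def split: if_splits)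

theorem theorem4:
  fixes m :: nat
  assumes "m \<ge> 1" and "CARD('d::finite) \<ge> 2"
  shows "\<exists>S :: (real ^ 'd) set. finite S \<and> card S = m \<and> S \<subseteq> nonneg_orthant \<and>
           auditing_complexity S (H_box_neg :: (real ^ 'd \<Rightarrow> int) set) = m"
proof -
  have "\<not> (\<forall>x y::'d. x = y)"
  proof
    assume "\<forall>x y::'d. x = y"
    then have "card (UNIV::'d set) \<le> Suc 0" by (simp add: card_le_Suc0_iff_eq)
    with assms(2) show False by simp
  qed
  then obtain i1 i2 :: 'd where i12: "i1 \<noteq> i2" by blast
  define p :: "nat \<Rightarrow> real ^ 'd" where
    "p k = (\<chi> i. if i = i1 then real k else if i = i2 then real m - real k else 0)" for k
  define a :: "nat \<Rightarrow> real ^ 'd" where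
    "a k = (\<chi> i. if i = i1 then real k + 1 else if i = i2 then real m - real k + 1 else 1)" for k
  define S where "S = p ` {..<m}"
  have injp: "inj_on p {..<m}"
  proof (rule inj_onI)
    fix x y assume "p x = p y"
    then have "p x $ i1 = p y $ i1" by simp
    then show "x = y" by (simp add: p_def)
  qed
  have cardS: "card S = m" using injp by (simp add: S_def card_image)
  have finS: "finite S" by (simp add: S_def)
  have Sorth: "S \<subseteq> nonneg_orthant"
    by (auto simp: S_def p_def nonneg_orthant_def)
  have a_orth: "k < m \<Longrightarrow> a k \<in> nonneg_orthant" for k
    by (auto simp: a_def nonneg_orthant_def)
  define h0 :: "real ^ 'd \<Rightarrow> int" where "h0 = h_box_neg 0"
  have h0H: "h0 \<in> H_box_neg"
    unfolding h0_def H_box_neg_def by (auto simp: nonneg_orthant_def)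
  have h0S: "x \<in> S \<Longrightarrow> h0 x = -1" for x
    using Sorth by (auto simp: h0_def h_box_neg_def h_box_def nonneg_orthant_def)
  have hk_in: "k < m \<Longrightarrow> h_box_neg (a k) (p k) = 1" for k
    using i12 by (auto simp: h_box_neg_def h_box_def a_def p_def)
  have hk_out: "k < m \<Longrightarrow> j < m \<Longrightarrow> j \<noteq> k \<Longrightarrow> h_box_neg (a k) (p j) = -1" for k j
  proof -
    assume km: "k < m" and jm: "j < m" and jk: "j \<noteq> k"
    show ?thesis
    proof (cases "j > k")
      case True
      then have "p j $ i1 \<ge> a k $ i1" by (simp add: a_def p_def)
      then show ?thesis by (auto simp: h_box_neg_def h_box_def)
    next
      case False
      with jk have "j < k" by simp
      then have "p j $ i2 \<ge> a k $ i2" using i12 by (simp add: a_def p_def)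
      then show ?thesis by (auto simp: h_box_neg_def h_box_def)
    qed
  qed
  define P where "P k \<longleftrightarrow> (\<exists>T. correct_auditor S (H_box_neg :: (real ^ 'd \<Rightarrow> int) set) T \<and>
        (\<forall>h\<in>H_box_neg. neg_queries T h \<le> k))" for k
  have Pm: "P m"
  proof -
    define xs where "xs = map p [0..<m]"
    have setxs: "set xs = S" by (auto simp: xs_def S_def)
    define T where "T = build xs (\<lambda>_. 0)"
    have R: "h \<in> H_box_neg \<Longrightarrow> fst (run T h) = S \<and> (\<forall>y\<in>S. snd (run T h) y = h y)" for h
      using build_run[of xs h "\<lambda>_. 0"] H_vals[of h] setxs by (auto simp: T_def)
    have "correct_auditor S H_box_neg T"
      using R by (auto simp: correct_auditor_def)
    moreover have "neg_queries T h \<le> m" if "h \<in> H_box_neg" for h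
    proof -
      have "neg_queries T h \<le> card (fst (run T h))"
        unfolding neg_queries_def by (rule card_mono) (auto simp: R[OF that] finS)
      then show ?thesis using R[OF that] cardS by simp
    qed
    ultimately show ?thesis unfolding P_def by blast
  qed
  have lower: "P k \<Longrightarrow> m \<le> k" for k
  proof -
    assume "P k"
    then obtain T where cT: "correct_auditor S H_box_neg T"
      and bT: "\<forall>h\<in>H_box_neg. neg_queries T h \<le> k" unfolding P_def by blast
    define Q where "Q = fst (run T h0)"
    have QS: "Q \<subseteq> S" and out0: "\<forall>x\<in>S. snd (run T h0) x = h0 x"
      using cT h0H by (auto simp: correct_auditor_def Q_def)
    have SQ: "S \<subseteq> Q"
    proof
      fix x assume xS: "x \<in> S"
      then obtain j where jm: "j < m" and xj: "x = p j" by (auto simp: S_def)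
      show "x \<in> Q"
      proof (rule ccontr)
        assume xQ: "x \<notin> Q"
        define h1 where "h1 = h_box_neg (a j)"
        have h1H: "h1 \<in> H_box_neg" unfolding h1_def H_box_neg_def using a_orth[OF jm] by auto
        have agree: "\<forall>y\<in>Q. h1 y = h0 y"
        proof
          fix y assume yQ: "y \<in> Q"
          then have "y \<in> S" using QS by auto
          then obtain i where im: "i < m" and yi: "y = p i" by (auto simp: S_def)
          have "i \<noteq> j" using xQ yQ xj yi by auto
          then show "h1 y = h0 y" using hk_out[OF jm im] h0S[OF \<open>y \<in> S\<close>] yi h1_def by simp
        qed
        have eq: "run T h1 = run T h0" using run_agree[of T h0 h1] agree Q_def by simp
        have "snd (run T h1) x = h1 x" using cT h1H xS by (auto simp: correct_auditor_def)
        then have "h0 x = h1 x" using eq out0 xS by simp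
        then show False using h0S[OF xS] hk_in[OF jm] xj h1_def by simp
      qed
    qed
    have "S \<subseteq> {x \<in> Q. h0 x = -1}" using SQ h0S by auto
    moreover have "finite Q" unfolding Q_def by (rule run_finite)
    ultimately have "card S \<le> neg_queries T h0"
      unfolding neg_queries_def Q_def[symmetric] by (intro card_mono) auto
    then show "m \<le> k" using bT h0H cardS by force
  qed
  have "auditing_complexity S H_box_neg = m"
    unfolding auditing_complexity_def P_def[symmetric]
    by (rule Least_equality) (use Pm lower in auto)
  then show ?thesis using finS cardS Sorth by blast
qed

end
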